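(* Let $K$ be a field, $f\colon R\to S$ a morphism of Zinbiel algebras, and $\Theta_t=\sum_{i\ge0}\theta_it^i$ a deformation of $f$ with $\theta_i=(m_{R,i};m_{S,i};f_i)$. Then the infinitesimal $\theta_1$ is a $2$-cocycle in $C^2_{\mathrm{Zinb}}(f,f)$, i.e. $d^2_f\theta_1=0$. More generally, if $\theta_i=0$ for $i=1,\dots,l$, then $\theta_{l+1}$ is a $2$-cocycle. Moreover, if $\overline{\Theta}_t$ is a deformation of $f$ equivalent to $\Theta_t$, then $\theta_1-\overline{\theta}_1$ is a $2$-coboundary; that is, the cohomology class of $\theta_1$ in $H^2_{\mathrm{Zinb}}(f,f)$ depends only on the equivalence class of $\Theta_t$.
   Context: A Zinbiel algebra over $K$ is a $K$-vector space $R$ with bilinear product $x\cdot y$ (also written $m_R(x,y)$) satisfying $(x\cdot y)\cdot z=x\cdot(y\cdot z)+x\cdot(z\cdot y)$. A morphism $f\colon R\to S$ is a linear map with $f(x\cdot y)=f(x)\cdot f(y)$. $R$ is a bimodule over itself, $S$ over itself, and $S$ is an $R$-bimodule via $r\cdot s=f(r)\cdot s$, $s\cdot r=s\cdot f(r)$. For a bimodule $A$ over $R$ and $1\le n\le4$, $C^n_{\mathrm{Zinb}}(R,A)=\mathrm{Hom}_K(R^{\otimes n},A)$ with $(d^1\varphi)(x,y)=x\cdot\varphi(y)-\varphi(x\cdot y)+\varphi(x)\cdot y$, $(d^2\varphi)(x,y,z)=x\cdot(\varphi(y,z)+\varphi(z,y))-\varphi(x\cdot y,z)+\varphi(x,y\cdot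 z+z\cdot y)-\varphi(x,y)\cdot z$, $(d^3\varphi)(x,y,z,w)=x\cdot\{\varphi(y,z,w)-\varphi(z,w,y)+\varphi(z,y,w)-\varphi(w,z,y)\}-\varphi(x\cdot y,z,w)+\varphi(x,y\cdot z+z\cdot y,w)-\varphi(x,y,z\cdot w+w\cdot z)+\varphi(x,y,z)\cdot w$. The deformation complex: $C^0_{\mathrm{Zinb}}(R,S)=0$, $d^0=0$, $C^n_{\mathrm{Zinb}}(f,f)=C^n_{\mathrm{Zinb}}(R,R)\times C^n_{\mathrm{Zinb}}(S,S)\times C^{n-1}_{\mathrm{Zinb}}(R,S)$ ($1\le n\le4$), $d^i_f(\xi;\pi;\varphi)=(d^i\xi;d^i\pi;f\xi-\pi f-d^{i-1}\varphi)$ with $(f\xi)(x_1,\dots)=f(\xi(x_1,\dots))$, $(\pi f)(x_1,\dots)=\pi(f(x_1),\dots)$. $H^2_{\mathrm{Zinb}}(f,f)$ is the second cohomology of this complex; elements of $C^1_{\mathrm{Zinb}}(f,f)$ are pairs $(\xi;\pi)$. A deformation of $f$ is a formal power series $\Theta_t=\sum_{i\ge0}\theta_it^i$ ($t$ an indeterminate) with $\theta_0=(m_R;m_S;f)$ and $\theta_i=(m_{R,i};m_{S,i};f_i)\in C^2_{\mathrm{Zinb}}(f,f)$, such that for $*=R,S$ the bilinear map $M_{*,t}=\sum_i m_{*,i}t^i$ satisfies $M_{*,t}(M_{*,t}(x,y),z)=M_{*,t}(x,M_{*,t}(y,z))+M_{*,t}(x,M_{*,t}(z,y))$ on $*[[t]]$,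 and $F_t=\sum_if_it^i$ satisfies $F_t(M_{R,t}(x,y))=M_{S,t}(F_t(x),F_t(y))$. Its infinitesimal is $\theta_1$. A formal isomorphism of $f$ is $\Phi_t=(\Phi_{R,t};\Phi_{S,t})=\sum_{i\ge0}(\phi_{R,i};\phi_{S,i})t^i$ with $(\phi_{R,0};\phi_{S,0})=(\mathrm{Id}_R;\mathrm{Id}_S)$ and $\phi_{R,i}\in\mathrm{Hom}_K(R,R)$, $\phi_{S,i}\in\mathrm{Hom}_K(S,S)$. Two deformations $\Theta_t=(M_{R,t};M_{S,t};F_t)$, $\overline{\Theta}_t=(\overline{M}_{R,t};\overline{M}_{S,t};\overline{F}_t)$ are equivalent if there is a formal isomorphism $\Phi_t$ with $\overline{M}_{R,t}=\Phi_{R,t}M_{R,t}\Phi_{R,t}^{-1}$ (i.e. $\overline{M}_{R,t}(x,y)=\Phi_{R,t}(M_{R,t}(\Phi_{R,t}^{-1}x,\Phi_{R,t}^{-1}y))$), similarly for $S$, and $\overline{F}_t=\Phi_{S,t}F_t\Phi_{R,t}^{-1}$. *)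

theory Defs
  imports Complex_Main
begin

definition k_bilinear :: "('k::field \<Rightarrow> 'a::ab_group_add \<Rightarrow> 'a) \<Rightarrow> ('k \<Rightarrow> 'b::ab_group_add \<Rightarrow> 'b)
    \<Rightarrow> ('a \<Rightarrow> 'a \<Rightarrow> 'b) \<Rightarrow> bool" where
  "k_bilinear sa sb m \<longleftrightarrow>
     (\<forall>x. Vector_Spaces.linear sa sb (m x)) \<and> (\<forall>y. Vector_Spaces.linear sa sb (\<lambda>x. m x y))"

definition zinbiel :: "('k::field \<Rightarrow> 'a::ab_group_add \<Rightarrow> 'a) \<Rightarrow> ('a \<Rightarrow> 'a \<Rightarrow> 'a) \<Rightarrow> bool" where
  "zinbiel sc m \<longleftrightarrow> vector_space sc \<and> k_bilinear sc sc m \<and>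
     (\<forall>x y z. m (m x y) z = m x (m y z) + m x (m z y))"

definition zinbiel_morphism ::
  "('k::field \<Rightarrow> 'r::ab_group_add \<Rightarrow> 'r) \<Rightarrow> ('k \<Rightarrow> 's::ab_group_add \<Rightarrow> 's)
   \<Rightarrow> ('r \<Rightarrow> 'r \<Rightarrow> 'r) \<Rightarrow> ('s \<Rightarrow> 's \<Rightarrow> 's) \<Rightarrow> ('r \<Rightarrow> 's) \<Rightarrow> bool" where
  "zinbiel_morphism scR scS mR mS f \<longleftrightarrow>
     zinbiel scR mR \<and> zinbiel scS mS \<and> Vector_Spaces.linear scR scS f \<and>
     (\<forall>x y. f (mR x y) = mS (f x) (f y))"

text \<open>Coboundary operators d^1, d^2 of C_Zinb(R,A) for an R-bimodule A with left action lam,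
  right action rho, and product mu of R.\<close>

definition zinb_d1 :: "('r \<Rightarrow> 'a \<Rightarrow> 'a) \<Rightarrow> ('a \<Rightarrow> 'r \<Rightarrow> 'a) \<Rightarrow> ('r \<Rightarrow> 'r \<Rightarrow> 'r)
    \<Rightarrow> ('r \<Rightarrow> 'a::ab_group_add) \<Rightarrow> 'r \<Rightarrow> 'r \<Rightarrow> 'a" where
  "zinb_d1 lam rho mu \<phi> x y = lam x (\<phi> y) - \<phi> (mu x y) + rho (\<phi> x) y"

definition zinb_d2 :: "('r::ab_group_add \<Rightarrow> 'a \<Rightarrow> 'a) \<Rightarrow> ('a \<Rightarrow> 'r \<Rightarrow> 'a) \<Rightarrow> ('r \<Rightarrow> 'r \<Rightarrow> 'r)
    \<Rightarrow> ('r \<Rightarrow> 'r \<Rightarrow> 'a::ab_group_add) \<Rightarrow> 'r \<Rightarrow> 'r \<Rightarrow> 'r \<Rightarrow> 'a" where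
  "zinb_d2 lam rho mu \<phi> x y z =
     lam x (\<phi> y z + \<phi> z y) - \<phi> (mu x y) z + \<phi> x (mu y z + mu z y) - rho (\<phi> x y) z"

text \<open>Deformation complex of f : R -> S. A 1-cochain is a pair (xi; pi) (C^0(R,S) = 0),
  a 2-cochain is a triple (xi; pi; phi) with phi in C^1(R,S).
  S is an R-bimodule via r.s = f(r).s and s.r = s.f(r).\<close>

definition zinb_d1f :: "('r \<Rightarrow> 'r \<Rightarrow> 'r) \<Rightarrow> ('s \<Rightarrow> 's \<Rightarrow> 's) \<Rightarrow> ('r \<Rightarrow> 's::ab_group_add)
    \<Rightarrow> ('r \<Rightarrow> 'r::ab_group_add) \<times> ('s \<Rightarrow> 's)
    \<Rightarrow> ('r \<Rightarrow> 'r \<Rightarrow> 'r) \<times> ('s \<Rightarrow> 's \<Rightarrow> 's) \<times> ('r \<Rightarrow> 's)" where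
  "zinb_d1f mR mS f c = (case c of (\<xi>, \<pi>) \<Rightarrow>
     (zinb_d1 mR mR mR \<xi>, zinb_d1 mS mS mS \<pi>, \<lambda>x. f (\<xi> x) - \<pi> (f x)))"

definition zinb_d2f :: "('r \<Rightarrow> 'r \<Rightarrow> 'r) \<Rightarrow> ('s \<Rightarrow> 's \<Rightarrow> 's) \<Rightarrow> ('r \<Rightarrow> 's::ab_group_add)
    \<Rightarrow> ('r \<Rightarrow> 'r \<Rightarrow> 'r::ab_group_add) \<times> ('s \<Rightarrow> 's \<Rightarrow> 's) \<times> ('r \<Rightarrow> 's)
    \<Rightarrow> ('r \<Rightarrow> 'r \<Rightarrow> 'r \<Rightarrow> 'r) \<times> ('s \<Rightarrow> 's \<Rightarrow> 's \<Rightarrow> 's) \<times> ('r \<Rightarrow> 'r \<Rightarrow> 's)" where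
  "zinb_d2f mR mS f c = (case c of (\<xi>, \<pi>, \<phi>) \<Rightarrow>
     (zinb_d2 mR mR mR \<xi>, zinb_d2 mS mS mS \<pi>,
      \<lambda>x y. f (\<xi> x y) - \<pi> (f x) (f y)
            - zinb_d1 (\<lambda>r s. mS (f r) s) (\<lambda>s r. mS s (f r)) mR \<phi> x y))"

definition zinb_C2f :: "('k::field \<Rightarrow> 'r::ab_group_add \<Rightarrow> 'r) \<Rightarrow> ('k \<Rightarrow> 's::ab_group_add \<Rightarrow> 's)
    \<Rightarrow> ('r \<Rightarrow> 'r \<Rightarrow> 'r) \<times> ('s \<Rightarrow> 's \<Rightarrow> 's) \<times> ('r \<Rightarrow> 's) \<Rightarrow> bool" where
  "zinb_C2f scR scS c = (case c of (\<xi>, \<pi>, \<phi>) \<Rightarrow>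
     k_bilinear scR scR \<xi> \<and> k_bilinear scS scS \<pi> \<and> Vector_Spaces.linear scR scS \<phi>)"

definition zinb_2cocycle :: "('k::field \<Rightarrow> 'r::ab_group_add \<Rightarrow> 'r) \<Rightarrow> ('k \<Rightarrow> 's::ab_group_add \<Rightarrow> 's)
    \<Rightarrow> ('r \<Rightarrow> 'r \<Rightarrow> 'r) \<Rightarrow> ('s \<Rightarrow> 's \<Rightarrow> 's) \<Rightarrow> ('r \<Rightarrow> 's)
    \<Rightarrow> ('r \<Rightarrow> 'r \<Rightarrow> 'r) \<times> ('s \<Rightarrow> 's \<Rightarrow> 's) \<times> ('r \<Rightarrow> 's) \<Rightarrow> bool" where
  "zinb_2cocycle scR scS mR mS f c \<longleftrightarrow> zinb_C2f scR scS c \<and>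
     zinb_d2f mR mS f c = ((\<lambda>_ _ _. 0), (\<lambda>_ _ _. 0), (\<lambda>_ _. 0))"

definition zinb_2coboundary :: "('k::field \<Rightarrow> 'r::ab_group_add \<Rightarrow> 'r) \<Rightarrow> ('k \<Rightarrow> 's::ab_group_add \<Rightarrow> 's)
    \<Rightarrow> ('r \<Rightarrow> 'r \<Rightarrow> 'r) \<Rightarrow> ('s \<Rightarrow> 's \<Rightarrow> 's) \<Rightarrow> ('r \<Rightarrow> 's)
    \<Rightarrow> ('r \<Rightarrow> 'r \<Rightarrow> 'r) \<times> ('s \<Rightarrow> 's \<Rightarrow> 's) \<times> ('r \<Rightarrow> 's) \<Rightarrow> bool" where
  "zinb_2coboundary scR scS mR mS f c \<longleftrightarrow>
     (\<exists>\<xi> \<pi>. Vector_Spaces.linear scR scR \<xi> \<and> Vector_Spaces.linear scS scS \<pi> \<and>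
            c = zinb_d1f mR mS f (\<xi>, \<pi>))"

text \<open>The identities in *[[t]] for the K[[t]]-bilinear
  extensions are expressed coefficientwise (coefficient of t^n) on elements of R, S.\<close>

definition zinb_deformation ::
  "('k::field \<Rightarrow> 'r::ab_group_add \<Rightarrow> 'r) \<Rightarrow> ('k \<Rightarrow> 's::ab_group_add \<Rightarrow> 's)
   \<Rightarrow> ('r \<Rightarrow> 'r \<Rightarrow> 'r) \<Rightarrow> ('s \<Rightarrow> 's \<Rightarrow> 's) \<Rightarrow> ('r \<Rightarrow> 's)
   \<Rightarrow> (nat \<Rightarrow> 'r \<Rightarrow> 'r \<Rightarrow> 'r) \<Rightarrow> (nat \<Rightarrow> 's \<Rightarrow> 's \<Rightarrow> 's) \<Rightarrow> (nat \<Rightarrow> 'r \<Rightarrow> 's) \<Rightarrow> bool" where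
  "zinb_deformation scR scS mR mS f mRs mSs fs \<longleftrightarrow>
     mRs 0 = mR \<and> mSs 0 = mS \<and> fs 0 = f \<and>
     (\<forall>i. zinb_C2f scR scS (mRs i, mSs i, fs i)) \<and>
     (\<forall>n x y z. (\<Sum>i\<le>n. mRs i (mRs (n - i) x y) z)
        = (\<Sum>i\<le>n. mRs i x (mRs (n - i) y z) + mRs i x (mRs (n - i) z y))) \<and>
     (\<forall>n x y z. (\<Sum>i\<le>n. mSs i (mSs (n - i) x y) z)
        = (\<Sum>i\<le>n. mSs i x (mSs (n - i) y z) + mSs i x (mSs (n - i) z y))) \<and>
     (\<forall>n x y. (\<Sum>i\<le>n. fs i (mRs (n - i) x y))
        = (\<Sum>i\<le>n. \<Sum>j\<le>n - i. mSs i (fs j x) (fs (n - i - j) y)))"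

definition formal_inverse :: "(nat \<Rightarrow> 'a \<Rightarrow> 'a::ab_group_add) \<Rightarrow> (nat \<Rightarrow> 'a \<Rightarrow> 'a) \<Rightarrow> bool" where
  "formal_inverse \<phi> \<psi> \<longleftrightarrow>
     (\<forall>n x. (\<Sum>i\<le>n. \<phi> i (\<psi> (n - i) x)) = (if n = 0 then x else 0)) \<and>
     (\<forall>n x. (\<Sum>i\<le>n. \<psi> i (\<phi> (n - i) x)) = (if n = 0 then x else 0))"

definition zinb_equivalent ::
  "('k::field \<Rightarrow> 'r::ab_group_add \<Rightarrow> 'r) \<Rightarrow> ('k \<Rightarrow> 's::ab_group_add \<Rightarrow> 's)
   \<Rightarrow> (nat \<Rightarrow> 'r \<Rightarrow> 'r \<Rightarrow> 'r) \<Rightarrow> (nat \<Rightarrow> 's \<Rightarrow> 's \<Rightarrow> 's) \<Rightarrow> (nat \<Rightarrow> 'r \<Rightarrow> 's)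
   \<Rightarrow> (nat \<Rightarrow> 'r \<Rightarrow> 'r \<Rightarrow> 'r) \<Rightarrow> (nat \<Rightarrow> 's \<Rightarrow> 's \<Rightarrow> 's) \<Rightarrow> (nat \<Rightarrow> 'r \<Rightarrow> 's) \<Rightarrow> bool" where
  "zinb_equivalent scR scS mRs mSs fs mRs' mSs' fs' \<longleftrightarrow>
     (\<exists>\<phi>R \<phi>S \<psi>R \<psi>S.
        \<phi>R 0 = id \<and> \<phi>S 0 = id \<and>
        (\<forall>i. Vector_Spaces.linear scR scR (\<phi>R i) \<and> Vector_Spaces.linear scS scS (\<phi>S i)) \<and>
        formal_inverse \<phi>R \<psi>R \<and> formal_inverse \<phi>S \<psi>S \<and>
        (\<forall>n x y. mRs' n x y = (\<Sum>i\<le>n. \<Sum>j\<le>n - i. \<Sum>k\<le>n - i - j.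
            \<phi>R i (mRs j (\<psi>R k x) (\<psi>R (n - i - j - k) y)))) \<and>
        (\<forall>n x y. mSs' n x y = (\<Sum>i\<le>n. \<Sum>j\<le>n - i. \<Sum>k\<le>n - i - j.
            \<phi>S i (mSs j (\<psi>S k x) (\<psi>S (n - i - j - k) y)))) \<and>
        (\<forall>n x. fs' n x = (\<Sum>i\<le>n. \<Sum>j\<le>n - i. \<phi>S i (fs j (\<psi>R (n - i - j) x)))))"

end

theory Submission
  imports Defs
begin

lemma lin_add: "Vector_Spaces.linear s1 s2 g \<Longrightarrow> g (a + b) = g a + g b"
proof -
  assume h: "Vector_Spaces.linear s1 s2 g"
  interpret Vector_Spaces.linear s1 s2 g by fact
  show ?thesis by (rule add)
qed

lemma lin_zero: "Vector_Spaces.linear s1 s2 g \<Longrightarrow> g 0 = 0"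
proof -
  assume h: "Vector_Spaces.linear s1 s2 g"
  interpret Vector_Spaces.linear s1 s2 g by fact
  show ?thesis by (rule zero)
qed

lemma lin_neg: "Vector_Spaces.linear s1 s2 g \<Longrightarrow> g (- a) = - g a"
proof -
  assume h: "Vector_Spaces.linear s1 s2 g"
  interpret Vector_Spaces.linear s1 s2 g by fact
  show ?thesis by (rule neg)
qed

lemma sum_two:
  fixes g :: "nat \<Rightarrow> 'a::comm_monoid_add"
  assumes "\<And>i. 0 < i \<Longrightarrow> i < n \<Longrightarrow> g i = 0" and "0 < n"
  shows "sum g {..n} = g 0 + g n"
proof -
  have "sum g {..n} = sum g {0, n}"
    by (rule sum.mono_neutral_right) (use assms in \<open>auto simp: le_less\<close>)
  then show ?thesis using assms(2) by simp
qed

lemma sum_one: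
  fixes g :: "nat \<Rightarrow> 'a::comm_monoid_add"
  shows "sum g {..Suc 0} = g 0 + g 1"
  by simp


theorem theorem3p1:
  fixes scR :: "'k::field \<Rightarrow> 'r::ab_group_add \<Rightarrow> 'r"
    and scS :: "'k \<Rightarrow> 's::ab_group_add \<Rightarrow> 's"
    and mR :: "'r \<Rightarrow> 'r \<Rightarrow> 'r" and mS :: "'s \<Rightarrow> 's \<Rightarrow> 's" and f :: "'r \<Rightarrow> 's"
    and mRs :: "nat \<Rightarrow> 'r \<Rightarrow> 'r \<Rightarrow> 'r" and mSs :: "nat \<Rightarrow> 's \<Rightarrow> 's \<Rightarrow> 's"
    and fs :: "nat \<Rightarrow> 'r \<Rightarrow> 's"
  assumes hf: "zinbiel_morphism scR scS mR mS f"
    and hdef: "zinb_deformation scR scS mR mS f mRs mSs fs"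
  shows "zinb_2cocycle scR scS mR mS f (mRs 1, mSs 1, fs 1)
    \<and> (\<forall>l::nat. (\<forall>i\<in>{1..l}. (mRs i, mSs i, fs i) = ((\<lambda>_ _. 0), (\<lambda>_ _. 0), (\<lambda>_. 0)))
          \<longrightarrow> zinb_2cocycle scR scS mR mS f (mRs (l + 1), mSs (l + 1), fs (l + 1)))
    \<and> (\<forall>mRs' mSs' fs'. zinb_deformation scR scS mR mS f mRs' mSs' fs'
          \<and> zinb_equivalent scR scS mRs mSs fs mRs' mSs' fs'
          \<longrightarrow> zinb_2coboundary scR scS mR mS f
                (\<lambda>x y. mRs 1 x y - mRs' 1 x y, \<lambda>x y. mSs 1 x y - mSs' 1 x y,
                 \<lambda>x. fs 1 x - fs' 1 x))"
proof -
  have h0R: "mRs 0 = mR" and h0S: "mSs 0 = mS" and h0f: "fs 0 = f"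
    and hC: "\<And>i. zinb_C2f scR scS (mRs i, mSs i, fs i)"
    and eqR: "\<And>n x y z. (\<Sum>i\<le>n. mRs i (mRs (n - i) x y) z)
        = (\<Sum>i\<le>n. mRs i x (mRs (n - i) y z) + mRs i x (mRs (n - i) z y))"
    and eqS: "\<And>n x y z. (\<Sum>i\<le>n. mSs i (mSs (n - i) x y) z)
        = (\<Sum>i\<le>n. mSs i x (mSs (n - i) y z) + mSs i x (mSs (n - i) z y))"
    and eqF: "\<And>n x y. (\<Sum>i\<le>n. fs i (mRs (n - i) x y))
        = (\<Sum>i\<le>n. \<Sum>j\<le>n - i. mSs i (fs j x) (fs (n - i - j) y))"
    using hdef unfolding zinb_deformation_def by auto
  have linR1: "\<And>i x. Vector_Spaces.linear scR scR (mRs i x)"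
    and linR2: "\<And>i y. Vector_Spaces.linear scR scR (\<lambda>x. mRs i x y)"
    and linS1: "\<And>i x. Vector_Spaces.linear scS scS (mSs i x)"
    and linS2: "\<And>i y. Vector_Spaces.linear scS scS (\<lambda>x. mSs i x y)"
    and linF: "\<And>i. Vector_Spaces.linear scR scS (fs i)"
    using hC unfolding zinb_C2f_def k_bilinear_def by auto
  have addR: "\<And>i x a b. mRs i x (a + b) = mRs i x a + mRs i x b"
    using linR1 lin_add by blast
  have addS: "\<And>i x a b. mSs i x (a + b) = mSs i x a + mSs i x b"
    using linS1 lin_add by blast
  have negR1: "\<And>i x a. mRs i x (- a) = - mRs i x a"
    using linR1 lin_neg by blast
  have negR2: "\<And>i y a. mRs i (- a) y = - mRs i a y"
    using linR2 lin_neg by fastforce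
  have negS1: "\<And>i x a. mSs i x (- a) = - mSs i x a"
    using linS1 lin_neg by blast
  have negS2: "\<And>i y a. mSs i (- a) y = - mSs i a y"
    using linS2 lin_neg by fastforce
  have zS2: "\<And>i y. mSs i 0 y = 0"
    using linS2 lin_zero by fastforce
  have linf: "Vector_Spaces.linear scR scS f"
    using hf unfolding zinbiel_morphism_def by auto
  have gen: "zinb_2cocycle scR scS mR mS f (mRs (Suc l), mSs (Suc l), fs (Suc l))"
    if Z: "\<forall>i\<in>{1..l}. mRs i = (\<lambda>_ _. 0) \<and> mSs i = (\<lambda>_ _. 0) \<and> fs i = (\<lambda>_. 0)" for l
  proof -
    define n where "n = Suc l"
    have zR: "\<And>i x y. 0 < i \<Longrightarrow> i < n \<Longrightarrow> mRs i x y = 0"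
      using Z unfolding n_def by (auto simp: fun_eq_iff)
    have zS: "\<And>i x y. 0 < i \<Longrightarrow> i < n \<Longrightarrow> mSs i x y = 0"
      using Z unfolding n_def by (auto simp: fun_eq_iff)
    have zF: "\<And>i x. 0 < i \<Longrightarrow> i < n \<Longrightarrow> fs i x = 0"
      using Z unfolding n_def by (auto simp: fun_eq_iff)
    have npos: "0 < n" unfolding n_def by simp
    have cR: "zinb_d2 mR mR mR (mRs n) x y z = 0" for x y z
    proof -
      have "(\<Sum>i\<le>n. mRs i (mRs (n - i) x y) z) = mR (mRs n x y) z + mRs n (mR x y) z"
        by (subst sum_two) (auto simp: zR npos h0R)
      moreover have "(\<Sum>i\<le>n. mRs i x (mRs (n - i) y z) + mRs i x (mRs (n - i) z y))
          = (mR x (mRs n y z) + mR x (mRs n z y)) + (mRs n x (mR y z) + mRs n x (mR z y))"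
        by (subst sum_two) (auto simp: zR npos h0R)
      ultimately have e: "mR (mRs n x y) z + mRs n (mR x y) z
          = (mR x (mRs n y z) + mR x (mRs n z y)) + (mRs n x (mR y z) + mRs n x (mR z y))"
        using eqR[of n x y z] by simp
      have a1: "mR x (mRs n y z + mRs n z y) = mR x (mRs n y z) + mR x (mRs n z y)"
        using addR[of 0] h0R by simp
      show ?thesis unfolding zinb_d2_def a1 addR
        using e by (simp add: algebra_simps)
    qed
    have cS: "zinb_d2 mS mS mS (mSs n) x y z = 0" for x y z
    proof -
      have "(\<Sum>i\<le>n. mSs i (mSs (n - i) x y) z) = mS (mSs n x y) z + mSs n (mS x y) z"
        by (subst sum_two) (auto simp: zS npos h0S)
      moreover have "(\<Sum>i\<le>n. mSs i x (mSs (n - i) y z) + mSs i x (mSs (n - i) z y))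
          = (mS x (mSs n y z) + mS x (mSs n z y)) + (mSs n x (mS y z) + mSs n x (mS z y))"
        by (subst sum_two) (auto simp: zS npos h0S)
      ultimately have e: "mS (mSs n x y) z + mSs n (mS x y) z
          = (mS x (mSs n y z) + mS x (mSs n z y)) + (mSs n x (mS y z) + mSs n x (mS z y))"
        using eqS[of n x y z] by simp
      have a1: "mS x (mSs n y z + mSs n z y) = mS x (mSs n y z) + mS x (mSs n z y)"
        using addS[of 0] h0S by simp
      show ?thesis unfolding zinb_d2_def a1 addS
        using e by (simp add: algebra_simps)
    qed
    have cF: "f (mRs n x y) - mSs n (f x) (f y)
        - zinb_d1 (\<lambda>r s. mS (f r) s) (\<lambda>s r. mS s (f r)) mR (fs n) x y = 0" for x y
    proof -
      have "(\<Sum>i\<le>n. fs i (mRs (n - i) x y)) = f (mRs n x y) + fs n (mR x y)"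
        by (subst sum_two) (auto simp: zF npos h0R h0f)
      moreover have "(\<Sum>i\<le>n. \<Sum>j\<le>n - i. mSs i (fs j x) (fs (n - i - j) y))
          = (\<Sum>j\<le>n. mSs 0 (fs j x) (fs (n - j) y)) + mSs n (f x) (f y)"
        by (subst sum_two) (auto simp: zS npos h0f)
      moreover have "(\<Sum>j\<le>n. mSs 0 (fs j x) (fs (n - j) y)) = mS (f x) (fs n y) + mS (fs n x) (f y)"
        by (subst sum_two) (auto simp: zF zS2 zS2[of 0, unfolded h0S] npos h0f h0S)
      ultimately have e: "f (mRs n x y) + fs n (mR x y)
          = (mS (f x) (fs n y) + mS (fs n x) (f y)) + mSs n (f x) (f y)"
        using eqF[of n x y] by simp
      show ?thesis unfolding zinb_d1_def
        using e by (simp add: algebra_simps)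
    qed
    show ?thesis
      unfolding zinb_2cocycle_def zinb_d2f_def
      using hC[of n] cR cS cF by (simp add: fun_eq_iff n_def)
  qed
  have P2: "\<forall>l::nat. (\<forall>i\<in>{1..l}. (mRs i, mSs i, fs i) = ((\<lambda>_ _. 0), (\<lambda>_ _. 0), (\<lambda>_. 0)))
          \<longrightarrow> zinb_2cocycle scR scS mR mS f (mRs (l + 1), mSs (l + 1), fs (l + 1))"
    using gen by simp
  have P1: "zinb_2cocycle scR scS mR mS f (mRs 1, mSs 1, fs 1)"
    using gen[of 0] by simp
  have P3: "zinb_2coboundary scR scS mR mS f
                (\<lambda>x y. mRs 1 x y - mRs' 1 x y, \<lambda>x y. mSs 1 x y - mSs' 1 x y,
                 \<lambda>x. fs 1 x - fs' 1 x)"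
    if E: "zinb_equivalent scR scS mRs mSs fs mRs' mSs' fs'" for mRs' mSs' fs'
  proof -
    obtain \<phi>R \<phi>S \<psi>R \<psi>S where
      p0R: "\<phi>R 0 = id" and p0S: "\<phi>S 0 = id" and
      lin: "\<forall>i. Vector_Spaces.linear scR scR (\<phi>R i) \<and> Vector_Spaces.linear scS scS (\<phi>S i)" and
      iR: "formal_inverse \<phi>R \<psi>R" and iS: "formal_inverse \<phi>S \<psi>S" and
      eR: "\<forall>n x y. mRs' n x y = (\<Sum>i\<le>n. \<Sum>j\<le>n - i. \<Sum>k\<le>n - i - j.
            \<phi>R i (mRs j (\<psi>R k x) (\<psi>R (n - i - j - k) y)))" and
      eS: "\<forall>n x y. mSs' n x y = (\<Sum>i\<le>n. \<Sum>j\<le>n - i. \<Sum>k\<le>n - i - j.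
            \<phi>S i (mSs j (\<psi>S k x) (\<psi>S (n - i - j - k) y)))" and
      eF: "\<forall>n x. fs' n x = (\<Sum>i\<le>n. \<Sum>j\<le>n - i. \<phi>S i (fs j (\<psi>R (n - i - j) x)))"
      using E unfolding zinb_equivalent_def by blast
    have fiR: "\<And>n x. (\<Sum>i\<le>n. \<phi>R i (\<psi>R (n - i) x)) = (if n = 0 then x else 0)"
      using iR unfolding formal_inverse_def by blast
    have fiS: "\<And>n x. (\<Sum>i\<le>n. \<phi>S i (\<psi>S (n - i) x)) = (if n = 0 then x else 0)"
      using iS unfolding formal_inverse_def by blast
    have q0R: "\<psi>R 0 x = x" for x
    proof -
      have "(\<Sum>i\<le>0. \<phi>R i (\<psi>R (0 - i) x)) = x" using fiR[of 0 x] by simp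
      then show ?thesis by (simp add: p0R)
    qed
    have q0S: "\<psi>S 0 x = x" for x
    proof -
      have "(\<Sum>i\<le>0. \<phi>S i (\<psi>S (0 - i) x)) = x" using fiS[of 0 x] by simp
      then show ?thesis by (simp add: p0S)
    qed
    have q1R: "\<psi>R 1 x = - \<phi>R 1 x" for x
    proof -
      have "(\<Sum>i\<le>1. \<phi>R i (\<psi>R (1 - i) x)) = 0" using fiR[of 1 x] by simp
      then have "\<psi>R 1 x + \<phi>R 1 x = 0" by (simp add: p0R q0R)
      then show ?thesis by (simp add: eq_neg_iff_add_eq_0)
    qed
    have q1S: "\<psi>S 1 x = - \<phi>S 1 x" for x
    proof -
      have "(\<Sum>i\<le>1. \<phi>S i (\<psi>S (1 - i) x)) = 0" using fiS[of 1 x] by simp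
      then have "\<psi>S 1 x + \<phi>S 1 x = 0" by (simp add: p0S q0S)
      then show ?thesis by (simp add: eq_neg_iff_add_eq_0)
    qed
    have q1R': "\<psi>R (Suc 0) x = - \<phi>R (Suc 0) x" for x using q1R by simp
    have q1S': "\<psi>S (Suc 0) x = - \<phi>S (Suc 0) x" for x using q1S by simp
    have r1: "mRs' 1 x y = mR x (- \<phi>R 1 y) + mR (- \<phi>R 1 x) y + mRs 1 x y + \<phi>R 1 (mR x y)" for x y
      using eR by (simp add: p0R q0R q1R q1R' h0R algebra_simps)
    have s1: "mSs' 1 x y = mS x (- \<phi>S 1 y) + mS (- \<phi>S 1 x) y + mSs 1 x y + \<phi>S 1 (mS x y)" for x y
      using eS by (simp add: p0S q0S q1S q1S' h0S algebra_simps)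
    have f1: "fs' 1 x = f (- \<phi>R 1 x) + fs 1 x + \<phi>S 1 (f x)" for x
      using eF by (simp add: p0S q0R q1R q1R' h0f algebra_simps)
    have r1': "mRs' (Suc 0) x y = mR x (- \<phi>R (Suc 0) y) + mR (- \<phi>R (Suc 0) x) y + mRs (Suc 0) x y + \<phi>R (Suc 0) (mR x y)" for x y
      using r1[of x y] by simp
    have s1': "mSs' (Suc 0) x y = mS x (- \<phi>S (Suc 0) y) + mS (- \<phi>S (Suc 0) x) y + mSs (Suc 0) x y + \<phi>S (Suc 0) (mS x y)" for x y
      using s1[of x y] by simp
    have f1': "fs' (Suc 0) x = f (- \<phi>R (Suc 0) x) + fs (Suc 0) x + \<phi>S (Suc 0) (f x)" for x
      using f1[of x] by simp
    have nR1: "mR x (- a) = - mR x a" for x a using negR1[of 0] h0R by simp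
    have nR2: "mR (- a) y = - mR a y" for y a using negR2[of 0] h0R by simp
    have nS1: "mS x (- a) = - mS x a" for x a using negS1[of 0] h0S by simp
    have nS2: "mS (- a) y = - mS a y" for y a using negS2[of 0] h0S by simp
    have nf: "f (- a) = - f a" for a using linf lin_neg by blast
    show ?thesis
      unfolding zinb_2coboundary_def
      apply (rule exI[of _ "\<phi>R 1"], rule exI[of _ "\<phi>S 1"])
      using lin by (simp add: zinb_d1f_def zinb_d1_def fun_eq_iff r1' s1' f1' nR1 nR2 nS1 nS2 nf algebra_simps)
  qed
  show ?thesis using P1 P2 P3 by blast
qed

end
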